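(* Let $(S,\sqcup,\cap)$ be an ado-semilattice and let $I$ be a relatively maximal $\lesssim$-ideal of $S$. Define $E_I=\{(a,b)\in S\times S: a\notin I,\ b\notin I,\ a\curlyvee b\notin I\}$ and $\epsilon_I=E_I\cup(I\times I)$, where $a\curlyvee b=(a\sqcup b)\cap(b\sqcup a)$. Then $\epsilon_I$ is a congruence of the ado-semilattice $(S,\sqcup,\cap)$ and $S/\epsilon_I$ is a flat ado-semilattice. Moreover, $S$ is a subdirect product of the algebras $S/\epsilon_I$ as $I$ ranges over all relatively maximal $\lesssim$-ideals of $S$.
   Context: An o-semilattice is an algebra $(L,\cap,\sqcup)$ such that $(L,\cap)$ is a semilattice and, with $x\leq y$ iff $x=x\cap y$, for all $x,y,z$: (i) $x\leq x\sqcup y$; (ii) $(x\cap y)\sqcup(y\cap z)\leq y$; (iii) $x\sqcup y\leq x\sqcup(y\cap(x\sqcup y))$; (iv) $x\cap z\leq(x\cap y)\sqcup z$. It is distributive if $(a\cap d)\sqcup((b\cap d)\cap(c\cap d))=((a\cap d)\sqcup(b\cap d))\cap((a\cap d)\sqcup(c\cap d))$ for all $a,b,c,d$. An ado-semilattice is a distributive o-semilattice in which $\sqcup$ is associative. Write $x\lesssim y$ iff $y\sqcup x=y$. A $\lesssim$-ideal is a non-empty subset $I$ that is a down-set under $\lesssim$ with $i\sqcup j\in I$ for all $i,j\in I$; it is relatively maximal if for some $d\in S$, $d\notin I$ and no $\lesssim$-ideal properly containing $I$ omits $d$. A flat ado-semilattice is an algebra $(T,\sqcup,\cap)$ with an element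 $0$ such that $a\cap a=a$, $0\cap a=a\cap 0=0$, $a\cap b=0$ for distinct $a,b$, $0\sqcup a=a$, and $a\sqcup b=a$ whenever $a\neq0$. *)

theory Defs
  imports Main "HOL-Library.FuncSet"
begin

text \<open>The algebra S is the whole type 'a, with join j (the operation \<sqcup>)
 and meet m (the operation \<inter>).\<close>

definition ole :: "('a \<Rightarrow> 'a \<Rightarrow> 'a) \<Rightarrow> 'a \<Rightarrow> 'a \<Rightarrow> bool" where
  "ole m x y \<longleftrightarrow> x = m x y"

definition o_semilattice :: "('a \<Rightarrow> 'a \<Rightarrow> 'a) \<Rightarrow> ('a \<Rightarrow> 'a \<Rightarrow> 'a) \<Rightarrow> bool" where
  "o_semilattice j m \<longleftrightarrow>
     (\<forall>x y z. m (m x y) z = m x (m y z)) \<and> (\<forall>x y. m x y = m y x) \<and> (\<forall>x. m x x = x) \<and>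
     (\<forall>x y. ole m x (j x y)) \<and>
     (\<forall>x y z. ole m (j (m x y) (m y z)) y) \<and>
     (\<forall>x y. ole m (j x y) (j x (m y (j x y)))) \<and>
     (\<forall>x y z. ole m (m x z) (j (m x y) z))"

definition distributive_os :: "('a \<Rightarrow> 'a \<Rightarrow> 'a) \<Rightarrow> ('a \<Rightarrow> 'a \<Rightarrow> 'a) \<Rightarrow> bool" where
  "distributive_os j m \<longleftrightarrow> o_semilattice j m \<and>
     (\<forall>a b c d. j (m a d) (m (m b d) (m c d)) = m (j (m a d) (m b d)) (j (m a d) (m c d)))"

definition ado_semilattice :: "('a \<Rightarrow> 'a \<Rightarrow> 'a) \<Rightarrow> ('a \<Rightarrow> 'a \<Rightarrow> 'a) \<Rightarrow> bool" where
  "ado_semilattice j m \<longleftrightarrow> distributive_os j m \<and> (\<forall>x y z. j (j x y) z = j x (j y z))"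

definition qle :: "('a \<Rightarrow> 'a \<Rightarrow> 'a) \<Rightarrow> 'a \<Rightarrow> 'a \<Rightarrow> bool" where
  "qle j x y \<longleftrightarrow> j y x = y"

definition qideal :: "('a \<Rightarrow> 'a \<Rightarrow> 'a) \<Rightarrow> 'a set \<Rightarrow> bool" where
  "qideal j I \<longleftrightarrow> I \<noteq> {} \<and> (\<forall>x y. y \<in> I \<and> qle j x y \<longrightarrow> x \<in> I) \<and>
     (\<forall>x\<in>I. \<forall>y\<in>I. j x y \<in> I)"

definition rel_max_qideal :: "('a \<Rightarrow> 'a \<Rightarrow> 'a) \<Rightarrow> 'a set \<Rightarrow> bool" where
  "rel_max_qideal j I \<longleftrightarrow> qideal j I \<and>
     (\<exists>d. d \<notin> I \<and> (\<forall>J. qideal j J \<and> I \<subset> J \<longrightarrow> d \<in> J))"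

definition curlyvee :: "('a \<Rightarrow> 'a \<Rightarrow> 'a) \<Rightarrow> ('a \<Rightarrow> 'a \<Rightarrow> 'a) \<Rightarrow> 'a \<Rightarrow> 'a \<Rightarrow> 'a" where
  "curlyvee j m a b = m (j a b) (j b a)"

definition E_rel :: "('a \<Rightarrow> 'a \<Rightarrow> 'a) \<Rightarrow> ('a \<Rightarrow> 'a \<Rightarrow> 'a) \<Rightarrow> 'a set \<Rightarrow> ('a \<times> 'a) set" where
  "E_rel j m I = {(a, b). a \<notin> I \<and> b \<notin> I \<and> curlyvee j m a b \<notin> I}"

definition eps_rel :: "('a \<Rightarrow> 'a \<Rightarrow> 'a) \<Rightarrow> ('a \<Rightarrow> 'a \<Rightarrow> 'a) \<Rightarrow> 'a set \<Rightarrow> ('a \<times> 'a) set" where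
  "eps_rel j m I = E_rel j m I \<union> (I \<times> I)"

definition congruence2 :: "('a \<Rightarrow> 'a \<Rightarrow> 'a) \<Rightarrow> ('a \<Rightarrow> 'a \<Rightarrow> 'a) \<Rightarrow> ('a \<times> 'a) set \<Rightarrow> bool" where
  "congruence2 j m r \<longleftrightarrow> equiv UNIV r \<and>
     (\<forall>a a' b b'. (a, a') \<in> r \<and> (b, b') \<in> r \<longrightarrow> (j a b, j a' b') \<in> r \<and> (m a b, m a' b') \<in> r)"

definition quot_op :: "('a \<times> 'a) set \<Rightarrow> ('a \<Rightarrow> 'a \<Rightarrow> 'a) \<Rightarrow> 'a set \<Rightarrow> 'a set \<Rightarrow> 'a set" where
  "quot_op r f X Y = r `` {f (SOME x. x \<in> X) (SOME y. y \<in> Y)}"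

definition flat_ado :: "'b set \<Rightarrow> ('b \<Rightarrow> 'b \<Rightarrow> 'b) \<Rightarrow> ('b \<Rightarrow> 'b \<Rightarrow> 'b) \<Rightarrow> bool" where
  "flat_ado T j m \<longleftrightarrow>
     (\<forall>a\<in>T. \<forall>b\<in>T. j a b \<in> T \<and> m a b \<in> T) \<and>
     (\<exists>z\<in>T. \<forall>a\<in>T. m a a = a \<and> m z a = z \<and> m a z = z \<and> j z a = a \<and>
        (\<forall>b\<in>T. (a \<noteq> b \<longrightarrow> m a b = z) \<and> (a \<noteq> z \<longrightarrow> j a b = a)))"

text \<open>S is a subdirect product of the quotients S/r_i (i \<in> R): the canonical
 homomorphism into the product (a homomorphism since each r_i is a congruence,
 with surjective projections since the factors are quotients) is injective.\<close>
definition subdirect_of_quotients :: "'i set \<Rightarrow> ('i \<Rightarrow> ('a \<times> 'a) set) \<Rightarrow> bool" where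
  "subdirect_of_quotients R r \<longleftrightarrow> inj (\<lambda>a. restrict (\<lambda>i. r i `` {a}) R)"

end

theory Submission
  imports Defs
begin

locale ados =
  fixes j m :: "'a \<Rightarrow> 'a \<Rightarrow> 'a"
  assumes A: "ado_semilattice j m"
begin

lemma ax00:
  "\<forall>x y z. m (m x y) z = m x (m y z)" "\<forall>x y. m x y = m y x" "\<forall>x. m x x = x"
  "\<forall>x y. x = m x (j x y)"
  "\<forall>x y z. j (m x y) (m y z) = m (j (m x y) (m y z)) y"
  "\<forall>x y. j x y = m (j x y) (j x (m y (j x y)))"
  "\<forall>x y z. m x z = m (m x z) (j (m x y) z)"
  "\<forall>a b c d. j (m a d) (m (m b d) (m c d)) = m (j (m a d) (m b d)) (j (m a d) (m c d))"
  "\<forall>x y z. j (j x y) z = j x (j y z)"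
  using A unfolding ado_semilattice_def distributive_os_def o_semilattice_def ole_def
  apply -
  apply (elim conjE, assumption)+
  done

lemmas ax0 = ax00[rule_format]

lemmas ax = ax0(1,2,3) ax0(4)[symmetric] ax0(5)[symmetric] ax0(6)[symmetric] ax0(7)[symmetric] ax0(8,9)

sublocale M: semilattice m
  by unfold_locales (rule ax(1), rule ax(2), rule ax(3))
sublocale J: semigroup j
  by unfold_locales (simp add: ax(9))

lemmas mac = M.assoc M.commute M.left_commute M.left_idem M.right_idem M.idem

lemma antis: "m a b = a \<Longrightarrow> m b a = b \<Longrightarrow> a = b" by (metis ax(2))

lemma jj: "j x x = x"
proof -
  have 1: "m (j x x) x = j x x" using ax(5)[of x x x] by (simp only: ax(3))
  show ?thesis by (rule antis[OF 1 ax(4)])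
qed
lemma le_join: "m x (j x y) = x" by (rule ax(4))
lemma L2: "m x y = x \<Longrightarrow> j x y = y"
proof -
  assume a: "m x y = x"
  have a': "m y x = x" using a ax(2) by metis
  have 1: "m (j x y) y = j x y" using ax(5)[of x y y] by (simp only: a ax(3))
  have 2: "m y (j x y) = y" using ax(7)[of y y x] by (simp only: a' ax(3))
  show ?thesis by (rule antis[OF 1 2])
qed
lemma L1: "m x y = x \<Longrightarrow> j y x = y"
proof -
  assume a: "m x y = x"
  have a': "m y x = x" using a ax(2) by metis
  have 1: "m (j y x) y = j y x" using ax(5)[of y y x] by (simp only: a' ax(3))
  show ?thesis by (rule antis[OF 1 le_join])
qed

lemma Mon: "m x z = x \<Longrightarrow> m (j w x) (j w z) = j w x"
proof -
  assume "m x z = x"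
  then have "j x z = z" by (rule L2)
  then have "j w z = j (j w x) z" by (simp only: ax(9))
  then show ?thesis using le_join[of "j w x" z] by (simp only:)
qed

lemma E1: "j w (m y (j w y)) = j w y"
proof -
  have 1: "m (j w (m y (j w y))) (j w y) = j w (m y (j w y))" by (rule Mon) (simp add: mac)
  have 2: "m (j w y) (j w (m y (j w y))) = j w y" by (rule ax(6))
  show ?thesis by (rule antis[OF 1 2])
qed

lemma dist': "m u e = u \<Longrightarrow> m v e = v \<Longrightarrow> m w e = w \<Longrightarrow> j u (m v w) = m (j u v) (j u w)"
proof -
  assume a: "m u e = u" "m v e = v" "m w e = w"
  have "m (m v e) (m w e) = m v w" using a by simp
  then show ?thesis using ax(8)[of u e v w] a by simp
qed

lemma LD: "m (j w x) (j w y) = j w (m x y)"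
proof -
  define t where "t = m (j w x) (j w y)"
  have wt: "m w t = w" unfolding t_def using le_join[of w x] le_join[of w y]
    by (metis M.assoc)
  have te: "m t (j w x) = t" unfolding t_def by (simp add: mac)
  have te': "m t (j w y) = t" unfolding t_def by (simp add: mac)
  have s1: "j w (m t (m x (j w x))) = m (j w t) (j w (m x (j w x)))"
    by (rule dist'[where e="j w x"]) (simp_all add: le_join te mac)
  have s1': "t = j w (m t x)"
  proof -
    have "m t (m x (j w x)) = m t x" using te by (metis M.assoc M.commute)
    then show ?thesis using s1 L2[OF wt] E1[of w x] te by simp
  qed
  have tx: "m (m t x) (j w y) = m t x" using te' by (metis M.assoc M.commute)
  have s2: "j w (m (m t x) (m y (j w y))) = m (j w (m t x)) (j w (m y (j w y)))"
    by (rule dist'[where e="j w y"]) (rule le_join, rule tx, simp add: mac)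
  have s2': "t = j w (m (m t x) (m y (j w y)))"
    using s2 s1'[symmetric] E1[of w y] te' by simp
  have 5: "m (j w (m (m t x) (m y (j w y)))) (j w (m x y)) = j w (m (m t x) (m y (j w y)))"
    by (rule Mon) (simp add: mac)
  have "m t (j w (m x y)) = t"
    using 5 by (simp only: s2'[symmetric])
  moreover have "m (j w (m x y)) t = j w (m x y)"
  proof -
    have "m (j w (m x y)) (j w x) = j w (m x y)" by (rule Mon) (simp add: mac)
    moreover have "m (j w (m x y)) (j w y) = j w (m x y)" by (rule Mon) (simp add: mac)
    ultimately show ?thesis unfolding t_def by (metis M.assoc)
  qed
  ultimately show ?thesis unfolding t_def by (rule antis)
qed

lemma le_u: "m u e = u \<Longrightarrow> m v e = v \<Longrightarrow> m u (j v u) = u"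
proof -
  assume a: "m u e = u" "m v e = v"
  have e1: "m e u = u" "m e v = v" using a by (simp_all add: mac)
  have "m (m e u) (j (m e v) u) = m e u" by (rule ax(7))
  then show ?thesis unfolding e1 by simp
qed

lemma comm_e: "m u e = u \<Longrightarrow> m v e = v \<Longrightarrow> j u v = j v u"
proof -
  assume a: "m u e = u" "m v e = v"
  have 1: "m u (j v u) = u" using le_u a by blast
  have 2: "m v (j u v) = v" using le_u a by blast
  have "m (j u v) (j u (j v u)) = j u v" by (rule Mon) (rule le_join)
  moreover have "j u (j v u) = j v u" using L2[OF 1] by (simp add: ax(9))
  ultimately have 3: "m (j u v) (j v u) = j u v" by simp
  have "m (j v u) (j v (j u v)) = j v u" by (rule Mon) (rule le_join)
  moreover have "j v (j u v) = j u v" using L2[OF 2] by (simp add: ax(9))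
  ultimately have 4: "m (j v u) (j u v) = j v u" by simp
  show ?thesis by (rule antis[OF 3 4])
qed

lemma join_le: "m u e = u \<Longrightarrow> m v e = v \<Longrightarrow> m (j u v) e = j u v"
proof -
  assume a: "m u e = u" "m v e = v"
  have e1: "m e v = v" using a by (simp add: mac)
  have "m (j (m u e) (m e v)) e = j (m u e) (m e v)" by (rule ax(5))
  then show ?thesis unfolding e1 a by simp
qed

lemma CZ: "m a e = a \<Longrightarrow> m b e = b \<Longrightarrow> j b a = b \<Longrightarrow> m a b = a"
proof -
  assume a: "m a e = a" "m b e = b" "j b a = b"
  have "j a b = b" using comm_e[OF a(1,2)] a(3) by simp
  then show ?thesis using le_join[of a b] by simp
qed

lemma R: assumes X: "m X Z = X" and Y: "m Y Z = Y" and Xd: "j X d = X" and Yd: "j Y d = Y"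
  shows "j (m X Y) d = m X Y"
proof -
  define W where "W = m X Y"
  define G where "G = j d Z"
  define H where "H = m Z G"
  have HZ: "m H Z = H" unfolding H_def by (simp add: mac)
  have HG: "m H G = H" unfolding H_def by (simp add: mac)
  have dG: "m d G = d" unfolding G_def by (rule ax(4))
  have WZ: "m W Z = W" unfolding W_def using X by (metis M.assoc M.commute)
  have XZ: "j X Z = Z" using X by (rule L2)
  have dZ: "j Z d = Z"
  proof -
    have ZX: "j Z X = Z" using X by (rule L1)
    have "j Z d = j (j Z X) d" using ZX by simp
    also have "\<dots> = j Z (j X d)" by (simp only: ax(9))
    finally show ?thesis using Xd ZX by simp
  qed
  have Hd: "j H d = G"
  proof -
    have "j H d = j d H" by (rule comm_e[OF HG dG])
    also have "\<dots> = G" unfolding H_def G_def by (rule E1)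
    finally show ?thesis .
  qed
  have XG: "j X G = Z" unfolding G_def using Xd XZ by (metis ax(9))
  have YZ: "j Y Z = Z" using Y by (rule L2)
  have YG: "j Y G = Z" unfolding G_def using Yd YZ by (metis ax(9))
  have HX: "j H X = Z"
  proof -
    have "j H X = j X H" by (rule comm_e[OF HZ X])
    also have "\<dots> = j (j X d) H" using Xd by simp
    also have "\<dots> = j X (j d H)" by (simp only: ax(9))
    also have "\<dots> = j X G" unfolding H_def G_def by (simp only: E1)
    finally show ?thesis using XG by simp
  qed
  have HY: "j H Y = Z"
  proof -
    have "j H Y = j Y H" by (rule comm_e[OF HZ Y])
    also have "\<dots> = j (j Y d) H" using Yd by simp
    also have "\<dots> = j Y (j d H)" by (simp only: ax(9))
    also have "\<dots> = j Y G" unfolding H_def G_def by (simp only: E1)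
    finally show ?thesis using YG by simp
  qed
  have HW: "j H W = Z"
    unfolding W_def using dist'[OF HZ X Y] HX HY by (simp only: ax(3))
  have WH: "j W H = Z" using HW comm_e[OF HZ WZ] by simp
  have WG: "j W G = Z"
  proof -
    have "j W G = j W (j H d)" using Hd by simp
    also have "\<dots> = j (j W H) d" by (simp only: ax(9))
    also have "\<dots> = Z" using WH dZ by simp
    finally show ?thesis .
  qed
  have VZ: "m (j W d) Z = j W d"
  proof -
    have "m (j W d) (j (j W d) Z) = j W d" by (rule ax(4))
    moreover have "j (j W d) Z = Z" using WG unfolding G_def by (simp only: ax(9))
    ultimately show ?thesis by simp
  qed
  have WX: "j X W = X" unfolding W_def by (rule L1) (simp add: mac)
  have WY: "j Y W = Y" unfolding W_def by (rule L1) (simp add: mac)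
  have VX: "j X (j W d) = X"
  proof -
    have "j X (j W d) = j (j X W) d" by (simp only: ax(9))
    then show ?thesis using WX Xd by simp
  qed
  have VY: "j Y (j W d) = Y"
  proof -
    have "j Y (j W d) = j (j Y W) d" by (simp only: ax(9))
    then show ?thesis using WY Yd by simp
  qed
  have 1: "m (j W d) X = j W d" by (rule CZ[OF VZ X VX])
  have 2: "m (j W d) Y = j W d" by (rule CZ[OF VZ Y VY])
  have 3: "m (j W d) W = j W d"
  proof -
    have "m (j W d) (m X Y) = j W d" using 1 2 by (metis M.assoc)
    then show ?thesis unfolding W_def .
  qed
  have 4: "m W (j W d) = W" by (rule ax(4))
  show ?thesis using antis[OF 3 4] W_def by simp
qed


lemma ql_refl: "qle j x x" unfolding qle_def by (rule jj)
lemma ql_trans: "qle j x y \<Longrightarrow> qle j y z \<Longrightarrow> qle j x z"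
  unfolding qle_def by (metis ax(9))
lemma ql_j1: "qle j x (j x y)" unfolding qle_def by (rule L1) (rule le_join)
lemma ql_j2: "qle j y (j x y)" unfolding qle_def by (simp add: ax(9) jj)
lemma ql_lub: "qle j x z \<Longrightarrow> qle j y z \<Longrightarrow> qle j (j x y) z"
  unfolding qle_def by (metis ax(9))
lemma le_ql: "m x y = x \<Longrightarrow> qle j x y" unfolding qle_def by (rule L1)
lemma ql_mono: "qle j x y \<Longrightarrow> qle j (j w x) (j w y)"
  by (meson ql_j1 ql_j2 ql_lub ql_trans)
lemma jj_left: "j a (j a b) = j a b" by (simp add: ax(9)[symmetric] jj)
lemma j_absorb: "j (j a b) a = j a b" using ql_j1 unfolding qle_def .

lemma le_ql_eq: "m x y = x \<Longrightarrow> qle j y x \<Longrightarrow> x = y"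
  unfolding qle_def using L2 by metis

lemma qideal_down: "qideal j I \<Longrightarrow> y \<in> I \<Longrightarrow> qle j x y \<Longrightarrow> x \<in> I"
  unfolding qideal_def by blast
lemma qideal_join: "qideal j I \<Longrightarrow> x \<in> I \<Longrightarrow> y \<in> I \<Longrightarrow> j x y \<in> I"
  unfolding qideal_def by blast
lemma qideal_ne: "qideal j I \<Longrightarrow> \<exists>i. i \<in> I"
  unfolding qideal_def by blast

lemma pid: "qideal j {x. qle j x c}"
  unfolding qideal_def using ql_refl ql_trans ql_lub by blast

lemma cv_sym: "curlyvee j m a b = curlyvee j m b a"
  unfolding curlyvee_def by (rule ax(2))
lemma cv_refl: "curlyvee j m a a = a"
  unfolding curlyvee_def by (simp add: jj)
lemma meet_le_cv: "m (m a c) (curlyvee j m a c) = m a c"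
proof -
  have "m (m a c) (curlyvee j m a c) = m (m a (j a c)) (m c (j c a))"
    unfolding curlyvee_def by (simp add: mac)
  then show ?thesis by (simp add: le_join)
qed
lemma cv_le1: "m (curlyvee j m a b) (j a b) = curlyvee j m a b"
  unfolding curlyvee_def by (simp add: mac)
lemma cv_le2: "m (curlyvee j m a b) (j b a) = curlyvee j m a b"
  unfolding curlyvee_def by (simp add: mac)

lemma Zorn_ideal:
  assumes I0: "qideal j I0" and d: "d \<notin> I0"
  shows "\<exists>I. rel_max_qideal j I \<and> I0 \<subseteq> I \<and> d \<notin> I"
proof -
  define A where "A = {J. qideal j J \<and> I0 \<subseteq> J \<and> d \<notin> J}"
  have "\<exists>M\<in>A. \<forall>X\<in>A. M \<subseteq> X \<longrightarrow> X = M"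
  proof (rule Zorn_Lemma2, intro ballI)
    fix C assume C: "C \<in> chains A"
    show "\<exists>U\<in>A. \<forall>X\<in>C. X \<subseteq> U"
    proof (cases "C = {}")
      case True
      then show ?thesis using I0 d unfolding A_def by blast
    next
      case False
      have CA: "C \<subseteq> A" and ch: "\<forall>X\<in>C. \<forall>Y\<in>C. X \<subseteq> Y \<or> Y \<subseteq> X"
        using C unfolding chains_def chain_subset_def by auto
      have "qideal j (\<Union>C)"
        unfolding qideal_def
      proof (intro conjI allI impI ballI)
        show "\<Union>C \<noteq> {}" using False CA unfolding A_def qideal_def by blast
      next
        fix x y assume "y \<in> \<Union>C \<and> qle j x y"
        then show "x \<in> \<Union>C" using CA unfolding A_def qideal_def by blast
      next
        fix x y assume x: "x \<in> \<Union>C" and y: "y \<in> \<Union>C"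
        then obtain X Y where X: "X \<in> C" "x \<in> X" and Y: "Y \<in> C" "y \<in> Y" by blast
        from ch X Y have "X \<subseteq> Y \<or> Y \<subseteq> X" by blast
        then show "j x y \<in> \<Union>C"
        proof
          assume "X \<subseteq> Y"
          then have "j x y \<in> Y" using X Y CA qideal_join unfolding A_def by blast
          then show ?thesis using Y by blast
        next
          assume "Y \<subseteq> X"
          then have "j x y \<in> X" using X Y CA qideal_join unfolding A_def by blast
          then show ?thesis using X by blast
        qed
      qed
      moreover have "I0 \<subseteq> \<Union>C" using False CA unfolding A_def by blast
      moreover have "d \<notin> \<Union>C" using CA unfolding A_def by blast
      ultimately have "\<Union>C \<in> A" unfolding A_def by blast
      then show ?thesis by blast
    qed
  qed
  then obtain M where M: "M \<in> A" and max: "\<forall>X\<in>A. M \<subseteq> X \<longrightarrow> X = M" by blast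
  have "rel_max_qideal j M"
    unfolding rel_max_qideal_def
  proof (intro conjI exI[of _ d] allI impI)
    show "qideal j M" using M unfolding A_def by blast
    show "d \<notin> M" using M unfolding A_def by blast
    fix J assume J: "qideal j J \<and> M \<subset> J"
    show "d \<in> J"
    proof (rule ccontr)
      assume "d \<notin> J"
      then have "J \<in> A" using J M unfolding A_def by blast
      then show False using max J by blast
    qed
  qed
  then show ?thesis using M unfolding A_def by blast
qed

end

locale rmi = ados +
  fixes I d
  assumes Iid: "qideal j I" and dI: "d \<notin> I" and dmax: "\<And>J. qideal j J \<Longrightarrow> I \<subset> J \<Longrightarrow> d \<in> J"
begin

lemma notin_wit: assumes "x \<notin> I" shows "\<exists>i\<in>I. qle j d (j i x)"
proof -
  define J where "J = {z. \<exists>i\<in>I. qle j z (j i x)}"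
  obtain i0 where i0: "i0 \<in> I" using qideal_ne[OF Iid] by blast
  have "qideal j J"
    unfolding qideal_def
  proof (intro conjI allI impI ballI)
    show "J \<noteq> {}" using i0 ql_j2 unfolding J_def by blast
  next
    fix u v assume "v \<in> J \<and> qle j u v"
    then show "u \<in> J" unfolding J_def using ql_trans by blast
  next
    fix u v assume "u \<in> J" "v \<in> J"
    then obtain i i' where i: "i \<in> I" "qle j u (j i x)" and i': "i' \<in> I" "qle j v (j i' x)"
      unfolding J_def by blast
    have ii: "j i i' \<in> I" using qideal_join[OF Iid i(1) i'(1)] .
    have 1: "qle j (j i x) (j (j i i') x)"
      by (meson ql_j1 ql_j2 ql_lub ql_trans)
    have 2: "qle j (j i' x) (j (j i i') x)"
      by (meson ql_j1 ql_j2 ql_lub ql_trans)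
    have "qle j (j u v) (j (j i i') x)"
      using ql_lub ql_trans 1 2 i(2) i'(2) by blast
    then show "j u v \<in> J" unfolding J_def using ii by blast
  qed
  moreover have "I \<subset> J"
  proof -
    have "I \<subseteq> J" unfolding J_def using ql_j1 by blast
    moreover have "x \<in> J" unfolding J_def using i0 ql_j2 by blast
    ultimately show ?thesis using assms by blast
  qed
  ultimately have "d \<in> J" by (rule dmax)
  then show ?thesis unfolding J_def by blast
qed

lemma wit_notin: "i \<in> I \<Longrightarrow> qle j d (j i x) \<Longrightarrow> x \<notin> I"
  using qideal_join[OF Iid] qideal_down[OF Iid] dI by blast

lemma notin_up: "x \<notin> I \<Longrightarrow> qle j x y \<Longrightarrow> y \<notin> I"
  using qideal_down[OF Iid] by blast

lemma notin_up_le: "x \<notin> I \<Longrightarrow> m x y = x \<Longrightarrow> y \<notin> I"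
  using notin_up le_ql by blast

lemma common_wit: assumes "x \<notin> I" "y \<notin> I"
  shows "\<exists>i\<in>I. qle j d (j i x) \<and> qle j d (j i y)"
proof -
  obtain i1 where i1: "i1 \<in> I" "qle j d (j i1 x)" using notin_wit assms(1) by blast
  obtain i2 where i2: "i2 \<in> I" "qle j d (j i2 y)" using notin_wit assms(2) by blast
  have "j i1 i2 \<in> I" using qideal_join[OF Iid i1(1) i2(1)] .
  moreover have "qle j (j i1 x) (j (j i1 i2) x)" by (meson ql_j1 ql_j2 ql_lub ql_trans)
  moreover have "qle j (j i2 y) (j (j i1 i2) y)" by (meson ql_j1 ql_j2 ql_lub ql_trans)
  ultimately show ?thesis using i1 i2 ql_trans by blast
qed

lemma P: assumes "x \<notin> I" "y \<notin> I" "m x z = x" "m y z = y" shows "m x y \<notin> I"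
proof -
  obtain i where i: "i \<in> I" "qle j d (j i x)" "qle j d (j i y)" using common_wit assms(1,2) by blast
  have "j (m (j i x) (j i y)) d = m (j i x) (j i y)"
    by (rule R[where Z="j i z"]) (rule Mon, rule assms(3), rule Mon, rule assms(4),
        use i in \<open>simp_all add: qle_def\<close>)
  then have "qle j d (j i (m x y))" unfolding qle_def LD .
  then show ?thesis using wit_notin i(1) by blast
qed

definition sim where "sim a b \<longleftrightarrow> a \<notin> I \<and> b \<notin> I \<and> curlyvee j m a b \<notin> I"

lemma M: assumes "sim a b" shows "m a b \<notin> I"
proof -
  let ?c = "curlyvee j m a b"
  have a: "a \<notin> I" and b: "b \<notin> I" and c: "?c \<notin> I" using assms unfolding sim_def by auto
  have 1: "m a ?c \<notin> I" by (rule P[OF a c le_join cv_le1])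
  have 2: "m b ?c \<notin> I" by (rule P[OF b c le_join cv_le2])
  have 3: "m (m a ?c) (m b ?c) \<notin> I"
    by (rule P[OF 1 2, where z="?c"]) (simp_all add: mac)
  show ?thesis by (rule notin_up_le[OF 3]) (simp add: mac)
qed

lemma sim_sym: "sim a b \<Longrightarrow> sim b a" unfolding sim_def using cv_sym by metis

lemma sim_trans: assumes "sim a b" "sim b c" shows "sim a c"
proof -
  have 1: "m a b \<notin> I" using M assms(1) by blast
  have 2: "m b c \<notin> I" using M assms(2) by blast
  have 3: "m (m a b) (m b c) \<notin> I"
    by (rule P[OF 1 2, where z=b]) (simp_all add: mac)
  have "m (m (m a b) (m b c)) (m a c) = m (m a b) (m b c)" by (simp add: mac)
  then have "m a c \<notin> I" using notin_up_le[OF 3] by blast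
  then have "curlyvee j m a c \<notin> I" using notin_up_le meet_le_cv by blast
  then show ?thesis using assms unfolding sim_def by blast
qed

lemma sim_refl: "a \<notin> I \<Longrightarrow> sim a a" unfolding sim_def cv_refl by blast

lemma J1: "a \<notin> I \<Longrightarrow> sim (j a b) a"
  unfolding sim_def curlyvee_def j_absorb jj_left ax(3) using notin_up ql_j1 by blast

lemma J2: assumes a: "a \<in> I" and b: "b \<notin> I" shows "sim (j a b) b"
proof -
  have jab: "j a b \<notin> I" using notin_up[OF b ql_j2] .
  have cv: "curlyvee j m (j a b) b = curlyvee j m a b"
    unfolding curlyvee_def
  proof -
    have "j (j a b) b = j a b" by (simp add: ax(9) jj)
    moreover have "j b (j a b) = j b a" by (simp add: ax(9)[symmetric] j_absorb)
    ultimately show "m (j (j a b) b) (j b (j a b)) = m (j a b) (j b a)" by simp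
  qed
  have ja: "j a (curlyvee j m a b) = j a b"
    unfolding curlyvee_def LD[symmetric] jj_left
    by (simp add: ax(9)[symmetric] j_absorb jj_left)
  obtain i where i: "i \<in> I" "qle j d (j i b)" using notin_wit[OF b] by blast
  have "qle j (j i b) (j i (j a b))" by (rule ql_mono, rule ql_j2)
  also have "j i (j a b) = j (j i a) (curlyvee j m a b)" by (simp add: ax(9) ja)
  finally have "qle j (j i b) (j (j i a) (curlyvee j m a b))" .
  then have "qle j d (j (j i a) (curlyvee j m a b))" using i(2) ql_trans by blast
  moreover have "j i a \<in> I" using qideal_join[OF Iid i(1) a] .
  ultimately have "curlyvee j m a b \<notin> I" using wit_notin by blast
  then show ?thesis unfolding sim_def cv using jab b by blast
qed

lemma meet_sim: assumes "sim a b" shows "sim (m a b) a"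
proof -
  have 1: "m a b \<notin> I" using M assms by blast
  have "curlyvee j m (m a b) a = a"
  proof -
    have "j (m a b) a = a" by (rule L2) (simp add: mac)
    moreover have "j a (m a b) = a" by (rule L1) (simp add: mac)
    ultimately show ?thesis unfolding curlyvee_def by (simp add: ax(3))
  qed
  then show ?thesis unfolding sim_def using 1 assms unfolding sim_def by simp
qed

lemma meet_in: "a \<in> I \<or> b \<in> I \<Longrightarrow> m a b \<in> I"
proof -
  assume "a \<in> I \<or> b \<in> I"
  moreover have "qle j (m a b) a" by (rule le_ql) (simp add: mac)
  moreover have "qle j (m a b) b" by (rule le_ql) (simp add: mac)
  ultimately show ?thesis using qideal_down[OF Iid] by blast
qed

lemma eps_iff: "(a, b) \<in> eps_rel j m I \<longleftrightarrow> sim a b \<or> (a \<in> I \<and> b \<in> I)"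
  unfolding eps_rel_def E_rel_def sim_def by blast

lemma eps_refl: "(a, a) \<in> eps_rel j m I"
  unfolding eps_iff using sim_refl by blast
lemma eps_sym: "(a, b) \<in> eps_rel j m I \<Longrightarrow> (b, a) \<in> eps_rel j m I"
  unfolding eps_iff using sim_sym by blast
lemma sim_notin: "sim a b \<Longrightarrow> a \<notin> I \<and> b \<notin> I" unfolding sim_def by blast

lemma eps_trans: "(a, b) \<in> eps_rel j m I \<Longrightarrow> (b, c) \<in> eps_rel j m I \<Longrightarrow> (a, c) \<in> eps_rel j m I"
  unfolding eps_iff using sim_trans sim_notin by metis

lemma eps_equiv: "equiv UNIV (eps_rel j m I)"
  unfolding equiv_def refl_on_def sym_def trans_def
proof (intro conjI allI impI)
  show "eps_rel j m I \<subseteq> UNIV \<times> UNIV" by simp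
qed (use eps_refl eps_sym eps_trans in blast)+

lemma eps_j: assumes "(a, a') \<in> eps_rel j m I" "(b, b') \<in> eps_rel j m I"
  shows "(j a b, j a' b') \<in> eps_rel j m I"
proof (cases "a \<in> I")
  case False
  then have s: "sim a a'" using assms(1) unfolding eps_iff by blast
  then have "a' \<notin> I" unfolding sim_def by blast
  then show ?thesis unfolding eps_iff
    using J1[OF False, of b] J1[of a' b'] s sim_sym sim_trans by metis
next
  case True
  then have a': "a' \<in> I" using assms(1) unfolding eps_iff sim_def by blast
  show ?thesis
  proof (cases "b \<in> I")
    case True
    then have "b' \<in> I" using assms(2) unfolding eps_iff sim_def by blast
    then show ?thesis unfolding eps_iff using qideal_join[OF Iid] True a' \<open>a \<in> I\<close> by blast
  next
    case False
    then have s: "sim b b'" using assms(2) unfolding eps_iff by blast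
    then have "b' \<notin> I" unfolding sim_def by blast
    then show ?thesis unfolding eps_iff
      using J2[OF \<open>a \<in> I\<close> False] J2[OF a' \<open>b' \<notin> I\<close>] s sim_sym sim_trans by metis
  qed
qed

lemma eps_m: assumes "(a, a') \<in> eps_rel j m I" "(b, b') \<in> eps_rel j m I"
  shows "(m a b, m a' b') \<in> eps_rel j m I"
proof (cases "a \<in> I \<or> b \<in> I")
  case True
  then have "a' \<in> I \<or> b' \<in> I" using assms unfolding eps_iff sim_def by blast
  then show ?thesis unfolding eps_iff using meet_in True by blast
next
  case False
  then have sa: "sim a a'" and sb: "sim b b'" using assms unfolding eps_iff by blast+
  show ?thesis
  proof (cases "sim a b")
    case True
    then have "sim a' b'" using sa sb sim_sym sim_trans by metis
    then show ?thesis unfolding eps_iff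
      using meet_sim[OF True] meet_sim[of a' b'] sa sim_sym sim_trans by metis
  next
    case False
    have "\<not> sim a' b'" using False sa sb sim_sym sim_trans by metis
    have "m a b \<in> I"
      using False \<open>\<not> (a \<in> I \<or> b \<in> I)\<close> notin_up_le[OF _ meet_le_cv, of a b] unfolding sim_def by blast
    moreover have "m a' b' \<in> I"
      using \<open>\<not> sim a' b'\<close> sa sb notin_up_le[OF _ meet_le_cv, of a' b'] unfolding sim_def by blast
    ultimately show ?thesis unfolding eps_iff by blast
  qed
qed

lemma cong: "congruence2 j m (eps_rel j m I)"
  unfolding congruence2_def using eps_equiv eps_j eps_m by blast


abbreviation "r \<equiv> eps_rel j m I"

lemma class_I: "x \<in> I \<Longrightarrow> r `` {x} = I"
  unfolding Image_def using eps_iff sim_notin by blast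

lemma class_eq: "(x, y) \<in> r \<Longrightarrow> r `` {x} = r `` {y}"
  by (rule equiv_class_eq[OF eps_equiv])

lemma quot_j: "quot_op r j (r``{a}) (r``{b}) = r``{j a b}"
proof -
  have "a \<in> r``{a}" "b \<in> r``{b}" using eps_refl by auto
  then have "(SOME x. x \<in> r``{a}) \<in> r``{a}" "(SOME y. y \<in> r``{b}) \<in> r``{b}"
    by (meson someI)+
  then have "(a, SOME x. x \<in> r``{a}) \<in> r" "(b, SOME y. y \<in> r``{b}) \<in> r" by auto
  then have "(j a b, j (SOME x. x \<in> r``{a}) (SOME y. y \<in> r``{b})) \<in> r" by (rule eps_j)
  then show ?thesis unfolding quot_op_def using class_eq by metis
qed

lemma quot_m: "quot_op r m (r``{a}) (r``{b}) = r``{m a b}"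
proof -
  have "a \<in> r``{a}" "b \<in> r``{b}" using eps_refl by auto
  then have "(SOME x. x \<in> r``{a}) \<in> r``{a}" "(SOME y. y \<in> r``{b}) \<in> r``{b}"
    by (meson someI)+
  then have "(a, SOME x. x \<in> r``{a}) \<in> r" "(b, SOME y. y \<in> r``{b}) \<in> r" by auto
  then have "(m a b, m (SOME x. x \<in> r``{a}) (SOME y. y \<in> r``{b})) \<in> r" by (rule eps_m)
  then show ?thesis unfolding quot_op_def using class_eq by metis
qed

lemma flat: "flat_ado (UNIV // r) (quot_op r j) (quot_op r m)"
  unfolding flat_ado_def
proof (intro conjI ballI)
  fix A B assume A: "A \<in> UNIV // r" and B: "B \<in> UNIV // r"
  from A obtain a where a: "A = r``{a}" by (auto elim: quotientE)
  from B obtain b where b: "B = r``{b}" by (auto elim: quotientE)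
  show "quot_op r j A B \<in> UNIV // r" unfolding a b quot_j by (rule quotientI) simp
  show "quot_op r m A B \<in> UNIV // r" unfolding a b quot_m by (rule quotientI) simp
next
  obtain i0 where i0: "i0 \<in> I" using qideal_ne[OF Iid] by blast
  have IT: "I \<in> UNIV // r" using class_I[OF i0] quotientI[of i0 UNIV r] by simp
  show "\<exists>z\<in>UNIV // r. \<forall>A\<in>UNIV // r. quot_op r m A A = A \<and> quot_op r m z A = z \<and>
      quot_op r m A z = z \<and> quot_op r j z A = A \<and>
      (\<forall>B\<in>UNIV // r. (A \<noteq> B \<longrightarrow> quot_op r m A B = z) \<and> (A \<noteq> z \<longrightarrow> quot_op r j A B = A))"
  proof (intro bexI[OF _ IT] ballI conjI impI)
    fix A assume A: "A \<in> UNIV // r"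
    from A obtain a where a: "A = r``{a}" by (auto elim: quotientE)
    have zI: "I = r``{i0}" using class_I[OF i0] by simp
    show "quot_op r m A A = A" unfolding a quot_m ax(3) ..
    have m1: "quot_op r m (r``{i0}) (r``{a}) = I" unfolding quot_m
      using meet_in i0 class_I by simp
    have m2: "quot_op r m (r``{a}) (r``{i0}) = I" unfolding quot_m
      using meet_in i0 class_I by simp
    have j1: "quot_op r j (r``{i0}) (r``{a}) = r``{a}" unfolding quot_j
    proof (cases "a \<in> I")
      case True
      then show "r``{j i0 a} = r``{a}" using class_I qideal_join[OF Iid i0 True] by simp
    next
      case False
      then show "r``{j i0 a} = r``{a}" using J2[OF i0 False] eps_iff class_eq by blast
    qed
    show "quot_op r m I A = I" using m1 zI a by metis
    show "quot_op r m A I = I" using m2 zI a by metis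
    show "quot_op r j I A = A" using j1 zI a by metis
    fix B assume B: "B \<in> UNIV // r"
    from B obtain b where b: "B = r``{b}" by (auto elim: quotientE)
    {
      assume ne: "A \<noteq> B"
      then have nr: "(a, b) \<notin> r" using a b class_eq by blast
      have "m a b \<in> I"
      proof (cases "a \<in> I \<or> b \<in> I")
        case True then show ?thesis using meet_in by blast
      next
        case False
        then have "curlyvee j m a b \<in> I" using nr eps_iff unfolding sim_def by blast
        then show ?thesis using notin_up_le[OF _ meet_le_cv, of a b] by blast
      qed
      then show "quot_op r m A B = I" unfolding a b quot_m using class_I by simp
    }
    {
      assume ne: "A \<noteq> I"
      then have "a \<notin> I" using a class_I by blast
      then show "quot_op r j A B = A" unfolding a b quot_j using J1 eps_iff class_eq by blast
    }
  qed
qed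

end

context ados begin

lemma separate: assumes "a \<noteq> b" shows "\<exists>I. rel_max_qideal j I \<and> (a, b) \<notin> eps_rel j m I"
proof -
  have key: "\<exists>I. rel_max_qideal j I \<and> (a, b) \<notin> eps_rel j m I"
    if "x \<notin> I0" "qideal j I0" "\<And>I. I0 \<subseteq> I \<Longrightarrow> x \<notin> I \<Longrightarrow> (a, b) \<notin> eps_rel j m I" for x I0
    using Zorn_ideal[OF that(2,1)] that(3) by blast
  show ?thesis
  proof (cases "qle j a b")
    case False
    show ?thesis
    proof (rule key[of a "{x. qle j x b}"])
      show "a \<notin> {x. qle j x b}" using False by simp
      show "qideal j {x. qle j x b}" by (rule pid)
      fix I assume "{x. qle j x b} \<subseteq> I" "a \<notin> I"
      then show "(a, b) \<notin> eps_rel j m I" using ql_refl unfolding eps_rel_def E_rel_def by blast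
    qed
  next
    case ab: True
    show ?thesis
    proof (cases "qle j b a")
      case False
      show ?thesis
      proof (rule key[of b "{x. qle j x a}"])
        show "b \<notin> {x. qle j x a}" using False by simp
        show "qideal j {x. qle j x a}" by (rule pid)
        fix I assume "{x. qle j x a} \<subseteq> I" "b \<notin> I"
        then show "(a, b) \<notin> eps_rel j m I" using ql_refl unfolding eps_rel_def E_rel_def by blast
      qed
    next
      case ba: True
      have cv: "curlyvee j m a b = m a b"
        using ab ba unfolding curlyvee_def qle_def by simp
      have ma: "m (m a b) a = m a b" by (simp add: mac)
      have mb: "m (m a b) b = m a b" by (simp add: mac)
      show ?thesis
      proof (cases "qle j a (m a b)")
        case False
        show ?thesis
        proof (rule key[of a "{x. qle j x (m a b)}"])
          show "a \<notin> {x. qle j x (m a b)}" using False by simp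
          show "qideal j {x. qle j x (m a b)}" by (rule pid)
          fix I assume "{x. qle j x (m a b)} \<subseteq> I" "a \<notin> I"
          then show "(a, b) \<notin> eps_rel j m I" using ql_refl cv unfolding eps_rel_def E_rel_def by auto
        qed
      next
        case True
        then have 1: "m a b = a" using le_ql_eq[OF ma] by simp
        show ?thesis
        proof (cases "qle j b (m a b)")
          case False
          show ?thesis
          proof (rule key[of b "{x. qle j x (m a b)}"])
            show "b \<notin> {x. qle j x (m a b)}" using False by simp
            show "qideal j {x. qle j x (m a b)}" by (rule pid)
            fix I assume "{x. qle j x (m a b)} \<subseteq> I" "b \<notin> I"
            then show "(a, b) \<notin> eps_rel j m I" using ql_refl cv unfolding eps_rel_def E_rel_def by auto
          qed
        next
          case True
          then have "m a b = b" using le_ql_eq[OF mb] by simp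
          then show ?thesis using 1 assms by simp
        qed
      qed
    qed
  qed
qed

end

theorem lemma4p9:
  fixes j m :: "'a \<Rightarrow> 'a \<Rightarrow> 'a"
  assumes "ado_semilattice j m"
  shows "(\<forall>I. rel_max_qideal j I \<longrightarrow>
            congruence2 j m (eps_rel j m I) \<and>
            flat_ado (UNIV // eps_rel j m I) (quot_op (eps_rel j m I) j) (quot_op (eps_rel j m I) m))
         \<and> subdirect_of_quotients {I. rel_max_qideal j I} (eps_rel j m)"
proof -
  interpret ados j m by (rule ados.intro) (rule assms)
  have part1: "congruence2 j m (eps_rel j m I) \<and>
            flat_ado (UNIV // eps_rel j m I) (quot_op (eps_rel j m I) j) (quot_op (eps_rel j m I) m)"
    if "rel_max_qideal j I" for I
  proof -
    from that obtain d where "qideal j I" "d \<notin> I" "\<forall>J. qideal j J \<and> I \<subset> J \<longrightarrow> d \<in> J"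
      unfolding rel_max_qideal_def by blast
    then interpret rmi j m I d by unfold_locales (rule assms, blast+)
    show ?thesis using cong flat by blast
  qed
  have part2: "subdirect_of_quotients {I. rel_max_qideal j I} (eps_rel j m)"
    unfolding subdirect_of_quotients_def
  proof (rule injI)
    fix a b
    assume eq: "restrict (\<lambda>I. eps_rel j m I `` {a}) {I. rel_max_qideal j I} =
                restrict (\<lambda>I. eps_rel j m I `` {b}) {I. rel_max_qideal j I}"
    show "a = b"
    proof (rule ccontr)
      assume "a \<noteq> b"
      then obtain I where I: "rel_max_qideal j I" "(a, b) \<notin> eps_rel j m I" using separate by blast
      from I(1) obtain d where "qideal j I" "d \<notin> I" "\<forall>J. qideal j J \<and> I \<subset> J \<longrightarrow> d \<in> J"
        unfolding rel_max_qideal_def by blast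
      then interpret rmi j m I d by unfold_locales (rule assms, blast+)
      have "eps_rel j m I `` {a} = eps_rel j m I `` {b}"
        using fun_cong[OF eq, of I] I(1) by simp
      then have "(a, b) \<in> eps_rel j m I" using eps_refl by blast
      then show False using I(2) by blast
    qed
  qed
  show ?thesis using part1 part2 by blast
qed

end
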